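(* Let $\Lambda$ be a set of positive integers such that for all positive integers $a,b$: $a,b\in\Lambda$ if and only if $\operatorname{lcm}(a,b)\in\Lambda$. Suppose $\sigma=(\varepsilon,\varepsilon,\gamma;(123))$ is an autoparatopism of a Latin square $L$ of order $n$, and let $R_\Lambda=\{i\in[n]:o_\gamma(i)\in\Lambda\}$. If $R_\Lambda\ne\emptyset$, then the submatrix of $L$ with rows $R_\Lambda$ and columns $R_\Lambda$ is a subsquare of $L$ whose symbol set is $R_\Lambda$.
   Context: A Latin square $L$ of order $n$ is an $n\times n$ array with rows, columns and symbols indexed by $[n]$, in which each symbol occurs exactly once in each row and each column. Its set of triples is $O(L)$. A subsquare is a submatrix that is itself a Latin square. Permutations act on the right; $\varepsilon$ is the identity. A paratopism $(\alpha,\beta,\gamma;(123))$ maps $L$ to $L^\sigma$ with triple set $\{(z\gamma,x\alpha,y\beta):(x,y,z)\in O(L)\}$. It is an autoparatopism of $L$ if $L^\sigma=L$. $o_\pi(i)$ is the length of the cycle of $\pi$ containing $i$ (fixed points are cycles of length $1$). *)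

theory Defs
  imports "HOL-Combinatorics.Permutations"
begin

definition idx :: "nat \<Rightarrow> nat set" where
  "idx n = {1..n}"

text \<open>A set of triples T (row, column, symbol) forms a Latin square with rows R,
  columns C and symbols S: every triple lies in R x C x S, |R| = |C| = |S|, and
  each cell is filled exactly once, each symbol occurs exactly once in each row and column.\<close>
definition latin_on :: "nat set \<Rightarrow> nat set \<Rightarrow> nat set \<Rightarrow> (nat \<times> nat \<times> nat) set \<Rightarrow> bool" where
  "latin_on R C S T \<longleftrightarrow>
     finite R \<and> card R = card C \<and> card C = card S \<and>
     T \<subseteq> R \<times> C \<times> S \<and>
     (\<forall>x\<in>R. \<forall>y\<in>C. \<exists>!z. (x, y, z) \<in> T) \<and>
     (\<forall>x\<in>R. \<forall>z\<in>S. \<exists>!y. (x, y, z) \<in> T) \<and>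
     (\<forall>y\<in>C. \<forall>z\<in>S. \<exists>!x. (x, y, z) \<in> T)"

definition latin_square :: "nat \<Rightarrow> (nat \<times> nat \<times> nat) set \<Rightarrow> bool" where
  "latin_square n L \<longleftrightarrow> latin_on (idx n) (idx n) (idx n) L"

definition subsquare :: "(nat \<times> nat \<times> nat) set \<Rightarrow> nat set \<Rightarrow> nat set \<Rightarrow> nat set \<Rightarrow> bool" where
  "subsquare L R C S \<longleftrightarrow> latin_on R C S {(x, y, z) \<in> L. x \<in> R \<and> y \<in> C}"

text \<open>Paratopism (alpha, beta, gamma; (123)); permutations act on the right, so x alpha = alpha x.\<close>
definition paratopism_123 ::
  "(nat \<Rightarrow> nat) \<Rightarrow> (nat \<Rightarrow> nat) \<Rightarrow> (nat \<Rightarrow> nat) \<Rightarrow> (nat \<times> nat \<times> nat) set \<Rightarrow> (nat \<times> nat \<times> nat) set" where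
  "paratopism_123 \<alpha> \<beta> \<gamma> L = {(\<gamma> z, \<alpha> x, \<beta> y) | x y z. (x, y, z) \<in> L}"

definition autoparatopism_123 ::
  "nat \<Rightarrow> (nat \<Rightarrow> nat) \<Rightarrow> (nat \<Rightarrow> nat) \<Rightarrow> (nat \<Rightarrow> nat) \<Rightarrow> (nat \<times> nat \<times> nat) set \<Rightarrow> bool" where
  "autoparatopism_123 n \<alpha> \<beta> \<gamma> L \<longleftrightarrow>
     \<alpha> permutes idx n \<and> \<beta> permutes idx n \<and> \<gamma> permutes idx n \<and> paratopism_123 \<alpha> \<beta> \<gamma> L = L"

definition cyc_len :: "(nat \<Rightarrow> nat) \<Rightarrow> nat \<Rightarrow> nat" where
  "cyc_len \<pi> i = (LEAST k. 0 < k \<and> (\<pi> ^^ k) i = i)"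

end

theory Submission
  imports Defs
begin

lemma cyc_len_props:
  assumes "permutation g"
  shows "0 < cyc_len g w \<and> (\<forall>k. (g ^^ k) w = w \<longleftrightarrow> cyc_len g w dvd k)"
proof -
  obtain m where m: "m > 0" "(g ^^ m) w = w" using permutation_self[OF assms] by blast
  define c where "c = cyc_len g w"
  have P: "0 < c \<and> (g ^^ c) w = w" unfolding c_def cyc_len_def
    by (rule LeastI[of _ m]) (use m in auto)
  have L: "\<And>j. 0 < j \<Longrightarrow> (g ^^ j) w = w \<Longrightarrow> c \<le> j" unfolding c_def cyc_len_def
    by (rule Least_le) auto
  have mul: "(g ^^ (c * q)) w = w" for q
  proof (induction q)
    case (Suc q)
    have "(g ^^ (c * Suc q)) w = (g ^^ (c * q)) ((g ^^ c) w)"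
      by (simp only: mult_Suc_right add.commute[of c] funpow_add comp_apply)
    then show ?case using P Suc by simp
  qed simp
  have "(g ^^ k) w = w \<longleftrightarrow> c dvd k" for k
  proof
    assume h: "(g ^^ k) w = w"
    have k: "k = k mod c + c * (k div c)" by simp
    have "(g ^^ k) w = (g ^^ (k mod c + c * (k div c))) w" using k by simp
    also have "\<dots> = (g ^^ (k mod c)) ((g ^^ (c * (k div c))) w)"
      by (simp only: funpow_add comp_apply)
    finally have "(g ^^ k) w = (g ^^ (k mod c)) ((g ^^ (c * (k div c))) w)" .
    then have "(g ^^ (k mod c)) w = w" using h mul by simp
    moreover have "k mod c < c" using P by simp
    ultimately have "k mod c = 0" using L by (meson not_le neq0_conv)
    then show "c dvd k" by auto
  next
    assume "c dvd k" then obtain q where "k = c * q" by auto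
    then show "(g ^^ k) w = w" using mul by simp
  qed
  then show ?thesis using P c_def by simp
qed

theorem theorem3p6:
  fixes n :: nat and L :: "(nat \<times> nat \<times> nat) set" and \<gamma> :: "nat \<Rightarrow> nat"
    and \<Lambda> :: "nat set"
  assumes "\<Lambda> \<subseteq> {0<..}"
    and "\<forall>a b. 0 < a \<and> 0 < b \<longrightarrow> ((a \<in> \<Lambda> \<and> b \<in> \<Lambda>) \<longleftrightarrow> lcm a b \<in> \<Lambda>)"
    and "latin_square n L"
    and "autoparatopism_123 n id id \<gamma> L"
    and "{i \<in> idx n. cyc_len \<gamma> i \<in> \<Lambda>} \<noteq> {}"
  shows "subsquare L {i \<in> idx n. cyc_len \<gamma> i \<in> \<Lambda>} {i \<in> idx n. cyc_len \<gamma> i \<in> \<Lambda>}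
           {i \<in> idx n. cyc_len \<gamma> i \<in> \<Lambda>}"
proof -
  define R where "R = {i \<in> idx n. cyc_len \<gamma> i \<in> \<Lambda>}"
  define o' where "o' = cyc_len \<gamma>"
  have lat: "latin_on (idx n) (idx n) (idx n) L" using assms(3) unfolding latin_square_def .
  have perm: "\<gamma> permutes idx n" and eq: "paratopism_123 id id \<gamma> L = L"
    using assms(4) unfolding autoparatopism_123_def by auto
  have pm: "permutation \<gamma>" using perm permutation_permutes finite_atLeastAtMost idx_def by metis
  have cyc: "0 < o' w" "\<And>k. (\<gamma> ^^ k) w = w \<longleftrightarrow> o' w dvd k" for w
    using cyc_len_props[OF pm, of w] o'_def by auto
  have parts: "finite (idx n) \<and> card (idx n) = card (idx n) \<and> card (idx n) = card (idx n) \<and>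
     L \<subseteq> idx n \<times> idx n \<times> idx n \<and>
     (\<forall>x\<in>idx n. \<forall>y\<in>idx n. \<exists>!z. (x, y, z) \<in> L) \<and>
     (\<forall>x\<in>idx n. \<forall>z\<in>idx n. \<exists>!y. (x, y, z) \<in> L) \<and>
     (\<forall>y\<in>idx n. \<forall>z\<in>idx n. \<exists>!x. (x, y, z) \<in> L)"
    using lat unfolding latin_on_def by assumption
  have sub: "L \<subseteq> idx n \<times> idx n \<times> idx n" using parts by (elim conjE)
  have ex1_1: "\<forall>x\<in>idx n. \<forall>y\<in>idx n. \<exists>!z. (x, y, z) \<in> L"
    using parts by (elim conjE) assumption
  have ex1_2: "\<forall>x\<in>idx n. \<forall>z\<in>idx n. \<exists>!y. (x, y, z) \<in> L"
    using parts by (elim conjE) assumption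
  have ex1_3: "\<forall>y\<in>idx n. \<forall>z\<in>idx n. \<exists>!x. (x, y, z) \<in> L"
    using parts by (elim conjE) assumption
  note ex1 = ex1_1 ex1_2 ex1_3
  have uniq: "\<And>x y z z'. (x,y,z) \<in> L \<Longrightarrow> (x,y,z') \<in> L \<Longrightarrow> z = z'"
  proof -
    fix x y z z' assume a: "(x,y,z) \<in> L" "(x,y,z') \<in> L"
    then have "x \<in> idx n" "y \<in> idx n" using sub by auto
    then have "\<exists>!z. (x,y,z) \<in> L" using ex1(1) by simp
    then show "z = z'" using a by (metis)
  qed
  have step: "(\<gamma> z, x, y) \<in> L" if "(x,y,z) \<in> L" for x y z
  proof -
    have "(\<gamma> z, id x, id y) \<in> paratopism_123 id id \<gamma> L"
      unfolding paratopism_123_def using that by blast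
    then show ?thesis using eq by simp
  qed
  have step3: "(\<gamma> x, \<gamma> y, \<gamma> z) \<in> L" if "(x,y,z) \<in> L" for x y z
    using step[OF step[OF step[OF that]]] .
  have pow: "((\<gamma>^^k) x, (\<gamma>^^k) y, (\<gamma>^^k) z) \<in> L" if "(x,y,z) \<in> L" for x y z k
    using that by (induction k) (simp_all add: step3)
  have fix3: "(\<gamma>^^k) z = z" if "(x,y,z) \<in> L" "(\<gamma>^^k) x = x" "(\<gamma>^^k) y = y" for x y z k
    using pow[OF that(1), of k] that uniq by metis
  have dz: "o' z dvd lcm (o' x) (o' y)" if "(x,y,z) \<in> L" for x y z
    using fix3[OF that] cyc by simp
  have comm: "(\<gamma>^^k) (\<gamma> z) = \<gamma> ((\<gamma>^^k) z)" for k z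
    by (simp add: funpow_swap1)
  have dy: "o' y dvd lcm (o' z) (o' x)" if "(x,y,z) \<in> L" for x y z
  proof -
    let ?k = "lcm (o' z) (o' x)"
    have "(\<gamma>^^?k) z = z" "(\<gamma>^^?k) x = x" using cyc by auto
    then have "(\<gamma>^^?k) (\<gamma> z) = \<gamma> z" using comm by simp
    then have "(\<gamma>^^?k) y = y" using fix3[OF step[OF that]] \<open>(\<gamma>^^?k) x = x\<close> by blast
    then show ?thesis using cyc by simp
  qed
  have dx: "o' x dvd lcm (o' y) (o' z)" if "(x,y,z) \<in> L" for x y z
  proof -
    let ?k = "lcm (o' y) (o' z)"
    have "(\<gamma>^^?k) z = z" "(\<gamma>^^?k) y = y" using cyc by auto
    then have "(\<gamma>^^?k) (\<gamma> z) = \<gamma> z" "(\<gamma>^^?k) (\<gamma> y) = \<gamma> y" using comm by simp_all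
    then have "(\<gamma>^^?k) x = x" using fix3[OF step[OF step[OF that]]] by blast
    then show ?thesis using cyc by simp
  qed
  have lcms: "lcm a b = lcm b c \<and> lcm b c = lcm c a"
    if "c dvd lcm a b" "a dvd lcm b c" "b dvd lcm c a" for a b c :: nat
  proof -
    have 1: "lcm a b dvd lcm b c" using that by simp
    have 2: "lcm b c dvd lcm c a" using that by simp
    have 3: "lcm c a dvd lcm a b" using that by simp
    show ?thesis using 1 2 3 by (meson dvd_antisym dvd_trans)
  qed
  have L1: "lcm a b \<in> \<Lambda>" if "a \<in> \<Lambda>" "b \<in> \<Lambda>" for a b
    using assms(1,2) that by blast
  have L2: "a \<in> \<Lambda>" if "lcm a b \<in> \<Lambda>" "0 < a" "0 < b" for a b
    using assms(2) that by blast
  have closed: "x \<in> R \<and> y \<in> R \<and> z \<in> R" if T: "(x,y,z) \<in> L"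
    and two: "(x \<in> R \<and> y \<in> R) \<or> (y \<in> R \<and> z \<in> R) \<or> (z \<in> R \<and> x \<in> R)" for x y z
  proof -
    have idx: "x \<in> idx n" "y \<in> idx n" "z \<in> idx n" using T sub by auto
    have e: "lcm (o' x) (o' y) = lcm (o' y) (o' z) \<and> lcm (o' y) (o' z) = lcm (o' z) (o' x)"
      using lcms dx[OF T] dy[OF T] dz[OF T] by blast
    have pos: "0 < o' x" "0 < o' y" "0 < o' z" using cyc by auto
    have oR: "o' x \<in> \<Lambda> \<and> o' y \<in> \<Lambda> \<or> o' y \<in> \<Lambda> \<and> o' z \<in> \<Lambda> \<or> o' z \<in> \<Lambda> \<and> o' x \<in> \<Lambda>"
      using two unfolding R_def o'_def by blast
    have "lcm (o' x) (o' y) \<in> \<Lambda>"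
    proof -
      { assume "o' x \<in> \<Lambda> \<and> o' y \<in> \<Lambda>" then have ?thesis using L1 by blast }
      moreover { assume "o' y \<in> \<Lambda> \<and> o' z \<in> \<Lambda>" then have ?thesis using L1 e by metis }
      moreover { assume "o' z \<in> \<Lambda> \<and> o' x \<in> \<Lambda>" then have ?thesis using L1 e by metis }
      ultimately show ?thesis using oR by blast
    qed
    then have "lcm (o' x) (o' y) \<in> \<Lambda>" "lcm (o' y) (o' z) \<in> \<Lambda>" "lcm (o' z) (o' x) \<in> \<Lambda>"
      using e by metis+
    then have "o' x \<in> \<Lambda>" "o' y \<in> \<Lambda>" "o' z \<in> \<Lambda>" using L2 pos by blast+
    then show ?thesis using idx unfolding R_def o'_def by auto
  qed
  have Rsub: "R \<subseteq> idx n" unfolding R_def by auto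
  let ?T = "{(x, y, z) \<in> L. x \<in> R \<and> y \<in> R}"
  have "latin_on R R R ?T"
    unfolding latin_on_def
  proof (intro conjI ballI)
    show "finite R" by (rule finite_subset[OF Rsub]) (simp add: idx_def)
    show "card R = card R" by simp
    show "card R = card R" by simp
    show "?T \<subseteq> R \<times> R \<times> R"
    proof
      fix t assume "t \<in> ?T"
      then obtain x y z where t: "t = (x,y,z)" "(x,y,z) \<in> L" "x \<in> R" "y \<in> R" by blast
      then have "z \<in> R" using closed[OF t(2)] by blast
      then show "t \<in> R \<times> R \<times> R" using t by simp
    qed
  next
    fix x y assume xy: "x \<in> R" "y \<in> R"
    then have "x \<in> idx n" "y \<in> idx n" using Rsub by auto
    then have "\<exists>!z. (x,y,z) \<in> L" using ex1(1) by simp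
    then have "\<exists>z. (x,y,z) \<in> L \<and> (\<forall>z'. (x,y,z') \<in> L \<longrightarrow> z' = z)" unfolding Ex1_def .
    then obtain z where z0: "(x,y,z) \<in> L" "\<forall>z'. (x,y,z') \<in> L \<longrightarrow> z' = z" by blast
    have z: "(x,y,z) \<in> L" "\<And>z'. (x,y,z') \<in> L \<Longrightarrow> z' = z" using z0 by blast+
    show "\<exists>!z. (x, y, z) \<in> ?T"
    proof (rule ex1I[of _ z])
      show "(x, y, z) \<in> ?T" using z(1) xy by simp
      fix z' assume "(x, y, z') \<in> ?T" then show "z' = z" using z(2) by blast
    qed
  next
    fix x z assume xz: "x \<in> R" "z \<in> R"
    then have "x \<in> idx n" "z \<in> idx n" using Rsub by auto
    then have "\<exists>!y. (x,y,z) \<in> L" using ex1(2) by simp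
    then have "\<exists>y. (x,y,z) \<in> L \<and> (\<forall>y'. (x,y',z) \<in> L \<longrightarrow> y' = y)" unfolding Ex1_def .
    then obtain y where y0: "(x,y,z) \<in> L" "\<forall>y'. (x,y',z) \<in> L \<longrightarrow> y' = y" by blast
    have y: "(x,y,z) \<in> L" "\<And>y'. (x,y',z) \<in> L \<Longrightarrow> y' = y" using y0 by blast+
    have "y \<in> R" using closed[OF y(1)] xz by blast
    show "\<exists>!y. (x, y, z) \<in> ?T"
    proof (rule ex1I[of _ y])
      show "(x, y, z) \<in> ?T" using y(1) xz \<open>y \<in> R\<close> by simp
      fix y' assume "(x, y', z) \<in> ?T" then show "y' = y" using y(2) by blast
    qed
  next
    fix y z assume yz: "y \<in> R" "z \<in> R"
    then have "y \<in> idx n" "z \<in> idx n" using Rsub by auto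
    then have "\<exists>!x. (x,y,z) \<in> L" using ex1(3) by simp
    then have "\<exists>x. (x,y,z) \<in> L \<and> (\<forall>x'. (x',y,z) \<in> L \<longrightarrow> x' = x)" unfolding Ex1_def .
    then obtain x where x0: "(x,y,z) \<in> L" "\<forall>x'. (x',y,z) \<in> L \<longrightarrow> x' = x" by blast
    have x: "(x,y,z) \<in> L" "\<And>x'. (x',y,z) \<in> L \<Longrightarrow> x' = x" using x0 by blast+
    have "x \<in> R" using closed[OF x(1)] yz by blast
    show "\<exists>!x. (x, y, z) \<in> ?T"
    proof (rule ex1I[of _ x])
      show "(x, y, z) \<in> ?T" using x(1) yz \<open>x \<in> R\<close> by simp
      fix x' assume "(x', y, z) \<in> ?T" then show "x' = x" using x(2) by blast
    qed
  qed
  then show ?thesis unfolding subsquare_def R_def .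
qed

end
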